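(* Let $n\ge1$, $\omega\in(0,1)$, and let $B_1,\dots,B_n$ be independent real-valued service times with finite means $\mu_i$ and variances, satisfying $B_1\le_{\mathrm{dil}}\cdots\le_{\mathrm{dil}}B_n$. Use the mean-based schedule. For $k\in\{1,\dots,n-1\}$, let $\mathbb EW^{\mathrm{SVF}}_{k+1}$ be the expected waiting time of slot $k+1$ under the identity sequence, and let $\mathbb EW^{\mathrm{OPT}'}_{k+1}$ be the minimum of $\mathbb EW_{k+1}$ over all sequences $\tau$ with $\tau(i)\le k$ for all $i=1,\dots,k$. Suppose $\varrho'$ is such that $\mathbb EW^{\mathrm{SVF}}_{k+1}/\mathbb EW^{\mathrm{OPT}'}_{k+1}\le\varrho'$ for all $k$. Then $\varrho_\omega\le\varrho'$, where $\varrho_\omega=C(\mathrm{Id},\boldsymbol\mu,\omega)/\min_{\tau\in\mathsf S_n}C(\tau,\boldsymbol\mu,\omega)$.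
   Context: Appointment model: a sequence is a permutation $\tau\in\mathsf S_n$, $\tau(i)$ the patient in slot $i$; a schedule is $\boldsymbol x=(x_1,\dots,x_n)$, $x_j$ the interarrival time between patient $j$ and the next patient; the mean-based schedule is $\boldsymbol\mu=(\mu_1,\dots,\mu_n)$. Waiting and idle times: $W_1=I_1=0$, $W_{i+1}=(W_i+B_{\tau(i)}-x_{\tau(i)})^+$, $I_{i+1}=(W_i+B_{\tau(i)}-x_{\tau(i)})^-$, $a^+=\max\{0,a\}$, $a^-=\max\{0,-a\}$. Cost $C(\tau,\boldsymbol x,\omega)=\omega\sum_{i=1}^n\mathbb EI_i+(1-\omega)\sum_{i=1}^n\mathbb EW_i$. $\mathrm{Id}$ is the identity permutation. $X\le_{\mathrm{cx}}Y$ means $\mathbb E\phi(X)\le\mathbb E\phi(Y)$ for all convex $\phi$ for which the expectations exist; $X\le_{\mathrm{dil}}Y$ means $X-\mathbb EX\le_{\mathrm{cx}}Y-\mathbb EY$. *)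

theory Defs
  imports "HOL-Probability.Probability" "HOL-Combinatorics.Permutations"
begin

definition cx_le :: "'a measure \<Rightarrow> ('a \<Rightarrow> real) \<Rightarrow> ('a \<Rightarrow> real) \<Rightarrow> bool" where
  "cx_le M X Y \<longleftrightarrow>
     (\<forall>\<phi>::real \<Rightarrow> real. convex_on UNIV \<phi> \<longrightarrow>
        integrable M (\<lambda>s. \<phi> (X s)) \<longrightarrow> integrable M (\<lambda>s. \<phi> (Y s)) \<longrightarrow>
        (\<integral>s. \<phi> (X s) \<partial>M) \<le> (\<integral>s. \<phi> (Y s) \<partial>M))"

definition dil_le :: "'a measure \<Rightarrow> ('a \<Rightarrow> real) \<Rightarrow> ('a \<Rightarrow> real) \<Rightarrow> bool" where
  "dil_le M X Y \<longleftrightarrow>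
     cx_le M (\<lambda>s. X s - integral\<^sup>L M X) (\<lambda>s. Y s - integral\<^sup>L M Y)"

text \<open>Waiting time W_i (slots indexed from 1) for service times B, schedule x,
  sequence tau, at sample point s: W_1 = 0, W_(i+1) = (W_i + B_tau(i) - x_tau(i))^+.\<close>
fun wait :: "(nat \<Rightarrow> 'a \<Rightarrow> real) \<Rightarrow> (nat \<Rightarrow> real) \<Rightarrow> (nat \<Rightarrow> nat) \<Rightarrow> nat \<Rightarrow> 'a \<Rightarrow> real" where
  "wait B x \<tau> 0 s = 0"
| "wait B x \<tau> (Suc 0) s = 0"
| "wait B x \<tau> (Suc (Suc i)) s =
     max 0 (wait B x \<tau> (Suc i) s + B (\<tau> (Suc i)) s - x (\<tau> (Suc i)))"

fun idle :: "(nat \<Rightarrow> 'a \<Rightarrow> real) \<Rightarrow> (nat \<Rightarrow> real) \<Rightarrow> (nat \<Rightarrow> nat) \<Rightarrow> nat \<Rightarrow> 'a \<Rightarrow> real" where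
  "idle B x \<tau> 0 s = 0"
| "idle B x \<tau> (Suc 0) s = 0"
| "idle B x \<tau> (Suc (Suc i)) s =
     max 0 (- (wait B x \<tau> (Suc i) s + B (\<tau> (Suc i)) s - x (\<tau> (Suc i))))"

definition cost :: "'a measure \<Rightarrow> nat \<Rightarrow> (nat \<Rightarrow> 'a \<Rightarrow> real) \<Rightarrow> (nat \<Rightarrow> nat) \<Rightarrow> (nat \<Rightarrow> real) \<Rightarrow> real \<Rightarrow> real" where
  "cost M n B \<tau> x w =
     w * (\<Sum>i=1..n. integral\<^sup>L M (idle B x \<tau> i))
     + (1 - w) * (\<Sum>i=1..n. integral\<^sup>L M (wait B x \<tau> i))"

definition mean_sched :: "'a measure \<Rightarrow> (nat \<Rightarrow> 'a \<Rightarrow> real) \<Rightarrow> nat \<Rightarrow> real" where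
  "mean_sched M B j = integral\<^sup>L M (B j)"

definition EW_SVF :: "'a measure \<Rightarrow> (nat \<Rightarrow> 'a \<Rightarrow> real) \<Rightarrow> nat \<Rightarrow> real" where
  "EW_SVF M B k = integral\<^sup>L M (wait B (mean_sched M B) id (Suc k))"

definition EW_OPT' :: "'a measure \<Rightarrow> nat \<Rightarrow> (nat \<Rightarrow> 'a \<Rightarrow> real) \<Rightarrow> nat \<Rightarrow> real" where
  "EW_OPT' M n B k = Min {integral\<^sup>L M (wait B (mean_sched M B) \<tau> (Suc k)) | \<tau>.
       \<tau> permutes {1..n} \<and> (\<forall>i\<in>{1..k}. \<tau> i \<le> k)}"

definition rho :: "'a measure \<Rightarrow> nat \<Rightarrow> (nat \<Rightarrow> 'a \<Rightarrow> real) \<Rightarrow> real \<Rightarrow> real" where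
  "rho M n B w = cost M n B id (mean_sched M B) w /
     Min {cost M n B \<tau> (mean_sched M B) w | \<tau>. \<tau> permutes {1..n}}"

end

theory Submission
  imports Defs
begin


fun lind :: "nat \<Rightarrow> (nat \<Rightarrow> real) \<Rightarrow> real" where
  "lind 0 c = 0"
| "lind (Suc i) c = max 0 (lind i c + c (Suc i))"

lemma lind_nonneg: "lind i c \<ge> 0"
  by (cases i) auto

lemma lind_cong: "(\<And>l. l \<in> {1..i} \<Longrightarrow> c l = c' l) \<Longrightarrow> lind i c = lind i c'"
proof (induction i)
  case 0 then show ?case by simp
next
  case (Suc i)
  have "lind i c = lind i c'" using Suc by auto
  moreover have "c (Suc i) = c' (Suc i)" using Suc by auto
  ultimately show ?case by (metis lind.simps(2))
qed

lemma wait_lind: "wait B x \<tau> (Suc i) s = lind i (\<lambda>l. B (\<tau> l) s - x (\<tau> l))"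
  by (induction i) auto

lemma wait_nonneg: "wait B x \<tau> i s \<ge> 0"
proof (cases i)
  case (Suc j) then show ?thesis by (cases j) auto
qed simp

lemma convex_max_aff:
  assumes "convex_on UNIV (g::real\<Rightarrow>real)"
  shows "convex_on UNIV (\<lambda>t. max 0 (g t + (a * t + b)))"
  unfolding convex_on_def
proof (intro conjI ballI allI impI)
  show "convex (UNIV::real set)" by simp
  fix x y u v :: real assume uv: "0 \<le> u" "0 \<le> v" "u + v = 1"
  have g: "g (u *\<^sub>R x + v *\<^sub>R y) \<le> u * g x + v * g y"
    using assms uv unfolding convex_on_def by auto
  have e: "a * (u *\<^sub>R x + v *\<^sub>R y) + b = u * (a*x+b) + v * (a*y+b)"
    using uv by (simp add: algebra_simps) (metis distrib_left mult.right_neutral)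
  have m1: "u * (g x + (a*x+b)) \<le> u * max 0 (g x + (a * x + b))"
    using uv by (intro mult_left_mono) auto
  have m2: "v * (g y + (a*y+b)) \<le> v * max 0 (g y + (a * y + b))"
    using uv by (intro mult_left_mono) auto
  have p: "0 \<le> u * max 0 (g x + (a * x + b)) + v * max 0 (g y + (a * y + b))"
    using uv by auto
  show "max 0 (g (u *\<^sub>R x + v *\<^sub>R y) + (a * (u *\<^sub>R x + v *\<^sub>R y) + b))
        \<le> u * max 0 (g x + (a * x + b)) + v * max 0 (g y + (a * y + b))"
    using g e m1 m2 p by (simp add: algebra_simps)
qed

lemma lind_convex: "convex_on UNIV (\<lambda>t. lind i (z(j:=t)))"
proof (induction i)
  case 0 then show ?case by (simp add: convex_on_const)
next
  case (Suc i)
  have "convex_on UNIV (\<lambda>t. max 0 (lind i (z(j:=t)) + ((if Suc i = j then 1 else 0) * t + (if Suc i = j then 0 else z (Suc i)))))"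
    by (rule convex_max_aff[OF Suc])
  moreover have "(\<lambda>t. lind (Suc i) (z(j:=t))) = (\<lambda>t. max 0 (lind i (z(j:=t)) + ((if Suc i = j then 1 else 0) * t + (if Suc i = j then 0 else z (Suc i)))))"
    by (rule ext) simp
  ultimately show ?case by (simp only:)
qed

lemma max0_lip: "\<bar>max 0 (a::real) - max 0 b\<bar> \<le> \<bar>a - b\<bar>"
  by (simp add: max_def abs_if)

lemma lind_lip: "\<bar>lind i (z(j:=t)) - lind i (z(j:=t'))\<bar> \<le> \<bar>t - t'\<bar>"
proof (induction i)
  case 0 then show ?case by simp
next
  case (Suc i)
  show ?case
  proof (cases "Suc i = j")
    case True
    have "lind i (z(j:=t)) = lind i (z(j:=t'))" using True by (intro lind_cong) auto
    moreover have e1: "lind (Suc i) (z(j:=t)) = max 0 (lind i (z(j:=t)) + t)"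
      and e2: "lind (Suc i) (z(j:=t')) = max 0 (lind i (z(j:=t')) + t')" by (simp_all add: True[symmetric])
    ultimately show ?thesis using max0_lip[of "lind i (z(j := t')) + t" "lind i (z(j := t')) + t'"] 
      by (simp only: e1 e2) simp
  next
    case False
    have e1: "lind (Suc i) (z(j:=t)) = max 0 (lind i (z(j:=t)) + z (Suc i))"
      and e2: "lind (Suc i) (z(j:=t')) = max 0 (lind i (z(j:=t')) + z (Suc i))" using False by simp_all
    have "\<bar>max 0 (lind i (z(j:=t)) + z (Suc i)) - max 0 (lind i (z(j:=t')) + z (Suc i))\<bar> \<le> \<bar>t - t'\<bar>"
      using Suc.IH max0_lip[of "lind i (z(j := t)) + z (Suc i)" "lind i (z(j := t')) + z (Suc i)"] by linarith
    then show ?thesis by (simp only: e1 e2)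
  qed
qed

lemma lip_cont:
  assumes "\<And>x y. \<bar>\<phi> x - \<phi> y\<bar> \<le> \<bar>x - y\<bar>"
  shows "continuous_on UNIV (\<phi>::real\<Rightarrow>real)"
proof -
  have "1-lipschitz_on UNIV \<phi>"
    by (rule lipschitz_onI) (use assms in \<open>auto simp: dist_real_def\<close>)
  then show ?thesis by (rule lipschitz_on_continuous_on)
qed

lemma lip_int:
  fixes X :: "'a \<Rightarrow> real" and \<phi> :: "real \<Rightarrow> real"
  assumes "prob_space M" "integrable M X"
    and lip: "\<And>x y. \<bar>\<phi> x - \<phi> y\<bar> \<le> \<bar>x - y\<bar>"
  shows "integrable M (\<lambda>s. \<phi> (X s))"
proof -
  interpret prob_space M by fact
  have f1: "integrable M (\<lambda>s. \<bar>\<phi> 0\<bar> + \<bar>X s\<bar>)"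
    by (intro Bochner_Integration.integrable_add integrable_const Bochner_Integration.integrable_abs assms(2))
  have "\<phi> \<in> borel_measurable borel"
    by (rule borel_measurable_continuous_onI[OF lip_cont[OF lip]])
  moreover have "X \<in> borel_measurable M" using assms(2) by (rule borel_measurable_integrable)
  ultimately have f2: "(\<lambda>s. \<phi> (X s)) \<in> borel_measurable M"
    using measurable_compose by blast
  have f3: "AE s in M. norm (\<phi> (X s)) \<le> norm (\<bar>\<phi> 0\<bar> + \<bar>X s\<bar>)"
  proof (intro AE_I2)
    fix s
    have "\<bar>\<phi> (X s) - \<phi> 0\<bar> \<le> \<bar>X s - 0\<bar>" by (rule lip)
    then show "norm (\<phi> (X s)) \<le> norm (\<bar>\<phi> 0\<bar> + \<bar>X s\<bar>)" by simp
  qed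
  show ?thesis using Bochner_Integration.integrable_bound[OF f1 f2 f3] .
qed


lemma dil_chain:
  fixes \<phi> :: "real \<Rightarrow> real"
  assumes "prob_space M"
    and int: "\<forall>i\<in>{1..n}. integrable M (B i)"
    and dil: "\<forall>i\<in>{1..<n}. dil_le M (B i) (B (Suc i))"
    and cvx: "convex_on UNIV \<phi>"
    and lip: "\<And>x y. \<bar>\<phi> x - \<phi> y\<bar> \<le> \<bar>x - y\<bar>"
    and ab: "1 \<le> a" "a \<le> b" "b \<le> n"
  shows "(\<integral>s. \<phi> (B a s - integral\<^sup>L M (B a)) \<partial>M) \<le> (\<integral>s. \<phi> (B b s - integral\<^sup>L M (B b)) \<partial>M)"
proof -
  interpret prob_space M by fact
  show ?thesis using ab
proof (induction b)
  case 0 then show ?case by simp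
next
  case (Suc b)
  show ?case
  proof (cases "a = Suc b")
    case True then show ?thesis by simp
  next
    case False
    then have ab: "a \<le> b" "b \<le> n" "1 \<le> b" using Suc.prems by auto
    have IH: "(\<integral>s. \<phi> (B a s - integral\<^sup>L M (B a)) \<partial>M) \<le> (\<integral>s. \<phi> (B b s - integral\<^sup>L M (B b)) \<partial>M)"
      using Suc.IH ab Suc.prems by auto
    have "b \<in> {1..<n}" using ab Suc.prems by auto
    then have d: "cx_le M (\<lambda>s. B b s - integral\<^sup>L M (B b)) (\<lambda>s. B (Suc b) s - integral\<^sup>L M (B (Suc b)))"
      using dil unfolding dil_le_def by blast
    have i1: "integrable M (\<lambda>s. \<phi> (B b s - integral\<^sup>L M (B b)))"
    proof (rule lip_int[OF assms(1) _ lip])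
      have "b \<in> {1..n}" using ab by simp
      then show "integrable M (\<lambda>s. B b s - integral\<^sup>L M (B b))" using int by simp
    qed
    have i2: "integrable M (\<lambda>s. \<phi> (B (Suc b) s - integral\<^sup>L M (B (Suc b))))"
    proof (rule lip_int[OF assms(1) _ lip])
      have "Suc b \<in> {1..n}" using Suc.prems by simp
      then show "integrable M (\<lambda>s. B (Suc b) s - integral\<^sup>L M (B (Suc b)))" using int by simp
    qed
    have "(\<integral>s. \<phi> (B b s - integral\<^sup>L M (B b)) \<partial>M) \<le> (\<integral>s. \<phi> (B (Suc b) s - integral\<^sup>L M (B (Suc b))) \<partial>M)"
      using d cvx i1 i2 unfolding cx_le_def by blast
    with IH show ?thesis by linarith
  qed
qed
qed

lemma hybrid:
  fixes P Q :: "nat \<Rightarrow> real measure" and F :: "(nat \<Rightarrow> real) \<Rightarrow> ennreal"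
  assumes P: "\<And>i. prob_space (P i)" and Q: "\<And>i. prob_space (Q i)"
    and sP: "\<And>i. sets (P i) = sets borel" and sQ: "\<And>i. sets (Q i) = sets borel"
    and K: "finite K" and Fm: "F \<in> borel_measurable (PiM K (\<lambda>_. borel))"
    and le: "\<And>j z. j \<in> K \<Longrightarrow> (\<integral>\<^sup>+y. F (z(j:=y)) \<partial>P j) \<le> (\<integral>\<^sup>+y. F (z(j:=y)) \<partial>Q j)"
  shows "(\<integral>\<^sup>+x. F x \<partial>PiM K P) \<le> (\<integral>\<^sup>+x. F x \<partial>PiM K Q)"
proof -
  define H where "H = (\<lambda>S i. if i \<in> S then P i else Q i)"
  have Hp: "prob_space (H S i)" for S i using P Q by (simp add: H_def)
  have Hs: "sets (H S i) = sets borel" for S i using sP sQ by (simp add: H_def)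
  have FmH: "F \<in> borel_measurable (PiM L (H S))" if "L = K" for S L
  proof -
    have "sets (PiM L (H S)) = sets (PiM K (\<lambda>_. borel))"
      using that Hs by (intro sets_PiM_cong) auto
    then show ?thesis using Fm measurable_cong_sets by blast
  qed
  have main: "(\<integral>\<^sup>+x. F x \<partial>PiM K (H S)) \<le> (\<integral>\<^sup>+x. F x \<partial>PiM K Q)" if "finite S" for S
    using that
  proof (induction S rule: finite_induct)
    case empty
    have "PiM K (H {}) = PiM K Q" by (intro PiM_cong) (auto simp: H_def)
    then show ?case by simp
  next
    case (insert j S)
    have step: "(\<integral>\<^sup>+x. F x \<partial>PiM K (H (insert j S))) \<le> (\<integral>\<^sup>+x. F x \<partial>PiM K (H S))"
    proof (cases "j \<in> K")
      case False
      have "PiM K (H (insert j S)) = PiM K (H S)" using False by (intro PiM_cong) (auto simp: H_def)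
      then show ?thesis by simp
    next
      case True
      interpret H1: product_sigma_finite "H (insert j S)"
        by (rule product_sigma_finite.intro, rule prob_space_imp_sigma_finite[OF Hp])
      interpret H0: product_sigma_finite "H S"
        by (rule product_sigma_finite.intro, rule prob_space_imp_sigma_finite[OF Hp])
      have KK: "K = insert j (K - {j})" using True by auto
      have fK: "finite (K - {j})" "j \<notin> K - {j}" using K by auto
      have e1: "(\<integral>\<^sup>+x. F x \<partial>PiM K (H (insert j S))) = (\<integral>\<^sup>+ x. (\<integral>\<^sup>+ y. F (x(j := y)) \<partial>(H (insert j S) j)) \<partial>(Pi\<^sub>M (K - {j}) (H (insert j S))))"
        apply (subst KK)
        apply (rule H1.product_nn_integral_insert[OF fK])
        apply (rule FmH) using KK by simp
      have e0: "(\<integral>\<^sup>+x. F x \<partial>PiM K (H S)) = (\<integral>\<^sup>+ x. (\<integral>\<^sup>+ y. F (x(j := y)) \<partial>(H S j)) \<partial>(Pi\<^sub>M (K - {j}) (H S)))"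
        apply (subst KK)
        apply (rule H0.product_nn_integral_insert[OF fK])
        apply (rule FmH) using KK by simp
      have pe: "Pi\<^sub>M (K - {j}) (H (insert j S)) = Pi\<^sub>M (K - {j}) (H S)"
        by (intro PiM_cong) (auto simp: H_def)
      have "H (insert j S) j = P j" "H S j = Q j" using insert.hyps by (auto simp: H_def)
      then have "(\<integral>\<^sup>+ x. (\<integral>\<^sup>+ y. F (x(j := y)) \<partial>(H (insert j S) j)) \<partial>(Pi\<^sub>M (K - {j}) (H (insert j S))))
          \<le> (\<integral>\<^sup>+ x. (\<integral>\<^sup>+ y. F (x(j := y)) \<partial>(H S j)) \<partial>(Pi\<^sub>M (K - {j}) (H S)))"
        using le[OF True] unfolding pe by (intro nn_integral_mono) simp
      then show ?thesis using e1 e0 by simp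
    qed
    then show ?case using insert.IH by (rule order.trans)
  qed
  have "PiM K (H K) = PiM K P" by (intro PiM_cong) (auto simp: H_def)
  then show ?thesis using main[OF K] by simp
qed

lemma lind_meas:
  assumes "\<And>l. l \<in> {1..i} \<Longrightarrow> (\<lambda>s. c s l) \<in> borel_measurable M"
  shows "(\<lambda>s. lind i (c s)) \<in> borel_measurable M"
  using assms
proof (induction i)
  case 0 then show ?case by simp
next
  case (Suc i)
  have "(\<lambda>s. lind i (c s)) \<in> borel_measurable M" using Suc by auto
  moreover have "(\<lambda>s. c s (Suc i)) \<in> borel_measurable M" using Suc by auto
  ultimately have "(\<lambda>s. max 0 (lind i (c s) + c s (Suc i))) \<in> borel_measurable M"
    by (intro borel_measurable_max borel_measurable_add borel_measurable_const)
  then show ?case by simp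
qed

lemma lind_meas_PiM:
  assumes "{1..i} \<subseteq> K" "\<And>l. l \<in> K \<Longrightarrow> sets (N l) = sets borel"
  shows "(\<lambda>x. lind i x) \<in> borel_measurable (PiM K N)"
proof (rule lind_meas[where c="\<lambda>x. x"])
  fix l assume l: "l \<in> {1..i}"
  then have "(\<lambda>x. x l) \<in> measurable (PiM K N) (N l)" using assms by (intro measurable_component_singleton) auto
  moreover have "sets (N l) = sets borel" using assms l by auto
  ultimately show "(\<lambda>x. x l) \<in> borel_measurable (PiM K N)"
    using measurable_cong_sets by blast
qed

lemma (in prob_space) indep_sets_reindex:
  assumes ind: "indep_sets G (f ` I)" and inj: "inj_on f I"
  shows "indep_sets (\<lambda>i. G (f i)) I"
  unfolding indep_sets_def
proof (intro conjI ballI allI impI)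
  fix i assume "i \<in> I" then show "G (f i) \<subseteq> events" using ind unfolding indep_sets_def by auto
next
  fix J A assume J: "J \<subseteq> I" "J \<noteq> {}" "finite J" and A: "A \<in> Pi J (\<lambda>i. G (f i))"
  have injJ: "inj_on f J" using inj J inj_on_subset by blast
  define A' where "A' = (\<lambda>y. A (the_inv_into J f y))"
  have A'f: "A' (f j) = A j" if "j \<in> J" for j using that injJ by (simp add: A'_def the_inv_into_f_f)
  have "A' \<in> Pi (f ` J) G" using A A'f by auto
  moreover have "f ` J \<subseteq> f ` I" "f ` J \<noteq> {}" "finite (f ` J)" using J by auto
  ultimately have "prob (\<Inter>y\<in>f ` J. A' y) = (\<Prod>y\<in>f ` J. prob (A' y))"
    using ind unfolding indep_sets_def by blast
  moreover have "(\<Inter>y\<in>f ` J. A' y) = (\<Inter>j\<in>J. A j)" using A'f by auto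
  moreover have "(\<Prod>y\<in>f ` J. prob (A' y)) = (\<Prod>j\<in>J. prob (A j))"
    using A'f injJ by (simp add: prod.reindex)
  ultimately show "prob (\<Inter>j\<in>J. A j) = (\<Prod>j\<in>J. prob (A j))" by simp
qed

lemma (in prob_space) indep_vars_reindex:
  assumes ind: "indep_vars M' X (f ` I)" and inj: "inj_on f I"
  shows "indep_vars (\<lambda>i. M' (f i)) (\<lambda>i. X (f i)) I"
  using ind indep_sets_reindex[OF _ inj, of "\<lambda>y. {X y -` A \<inter> space M | A. A \<in> sets (M' y)}"]
  unfolding indep_vars_def2 by auto

lemma wait_prod:
  assumes "prob_space M" "prob_space.indep_vars M (\<lambda>_. borel) B {1..n}"
    and Bm: "\<forall>i\<in>{1..n}. B i \<in> borel_measurable M"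
    and inj: "inj_on \<tau> {1..k}" and rng: "\<tau> ` {1..k} \<subseteq> {1..n}" and k: "1 \<le> k"
  shows "(\<integral>\<^sup>+s. ennreal (wait B x \<tau> (Suc k) s) \<partial>M)
     = (\<integral>\<^sup>+y. ennreal (lind k y) \<partial>PiM {1..k} (\<lambda>l. distr M borel (\<lambda>s. B (\<tau> l) s - x (\<tau> l))))"
proof -
  interpret prob_space M by fact
  define X where "X = (\<lambda>l s. B (\<tau> l) s - x (\<tau> l))"
  have Xm: "X l \<in> borel_measurable M" if "l \<in> {1..k}" for l
  proof -
    have "\<tau> l \<in> {1..n}" using that rng by blast
    then have "B (\<tau> l) \<in> borel_measurable M" using Bm by blast
    then show ?thesis unfolding X_def by (intro borel_measurable_diff borel_measurable_const)
  qed
  have i1: "indep_vars (\<lambda>_. borel) B (\<tau> ` {1..k})" using assms(2) rng by (rule indep_vars_subset)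
  have i2: "indep_vars (\<lambda>i. (\<lambda>_. borel) (\<tau> i)) (\<lambda>i. B (\<tau> i)) {1..k}"
    by (rule indep_vars_reindex[OF i1 inj])
  have i3: "indep_vars (\<lambda>_. borel) X {1..k}"
    using indep_vars_compose2[OF i2, of "\<lambda>l v. v - x (\<tau> l)" "\<lambda>_. borel"] unfolding X_def by simp
  have d: "distr M (PiM {1..k} (\<lambda>_. borel)) (\<lambda>s. \<lambda>l\<in>{1..k}. X l s) = PiM {1..k} (\<lambda>l. distr M borel (X l))"
    using indep_vars_iff_distr_eq_PiM'[where I="{1..k}" and X=X and M'="\<lambda>_. borel"] i3 Xm k by auto
  have gm: "(\<lambda>s. \<lambda>l\<in>{1..k}. X l s) \<in> measurable M (PiM {1..k} (\<lambda>_. borel))"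
    by (rule measurable_restrict) (rule Xm)
  have lm: "(\<lambda>y. ennreal (lind k y)) \<in> borel_measurable (distr M (PiM {1..k} (\<lambda>_. borel)) (\<lambda>s. \<lambda>l\<in>{1..k}. X l s))"
  proof -
    have "(\<lambda>y. lind k y) \<in> borel_measurable (PiM {1..k} (\<lambda>_. borel))"
      by (rule lind_meas_PiM) auto
    then have "(\<lambda>y. ennreal (lind k y)) \<in> borel_measurable (PiM {1..k} (\<lambda>_. borel))" by measurable
    then show ?thesis using measurable_cong_sets[OF sets_distr refl] by blast
  qed
  have "(\<integral>\<^sup>+y. ennreal (lind k y) \<partial>PiM {1..k} (\<lambda>l. distr M borel (X l)))
      = (\<integral>\<^sup>+y. ennreal (lind k y) \<partial>distr M (PiM {1..k} (\<lambda>_. borel)) (\<lambda>s. \<lambda>l\<in>{1..k}. X l s))"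
    by (simp only: d)
  also have "\<dots> = (\<integral>\<^sup>+s. ennreal (lind k (\<lambda>l\<in>{1..k}. X l s)) \<partial>M)"
    by (rule nn_integral_distr[OF gm lm])
  also have "\<dots> = (\<integral>\<^sup>+s. ennreal (wait B x \<tau> (Suc k) s) \<partial>M)"
  proof (rule nn_integral_cong)
    fix s
    have "lind k (\<lambda>l\<in>{1..k}. X l s) = lind k (\<lambda>l. X l s)" by (rule lind_cong) simp
    then show "ennreal (lind k (\<lambda>l\<in>{1..k}. X l s)) = ennreal (wait B x \<tau> (Suc k) s)"
      by (simp add: wait_lind X_def)
  qed
  finally show ?thesis unfolding X_def by simp
qed

lemma lind_int:
  assumes "prob_space M" "\<And>l. l \<in> {1..i} \<Longrightarrow> integrable M (\<lambda>s. c s l)"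
  shows "integrable M (\<lambda>s. lind i (c s))"
  using assms(2)
proof (induction i)
  interpret prob_space M by fact
  case 0 then show ?case by simp
next
  interpret prob_space M by fact
  case (Suc i)
  have "integrable M (\<lambda>s. lind i (c s))" using Suc by auto
  moreover have "integrable M (\<lambda>s. c s (Suc i))" using Suc by auto
  ultimately have "integrable M (\<lambda>s. max 0 (lind i (c s) + c s (Suc i)))"
    by (intro Bochner_Integration.integrable_max integrable_const Bochner_Integration.integrable_add)
  then show ?case by simp
qed

lemma wait_int:
  assumes "prob_space M" "\<And>l. l \<in> {1..i} \<Longrightarrow> integrable M (B (\<tau> l))"
  shows "integrable M (wait B x \<tau> (Suc i))"
proof -
  interpret prob_space M by fact
  have "integrable M (\<lambda>s. lind i (\<lambda>l. B (\<tau> l) s - x (\<tau> l)))"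
    using assms by (intro lind_int) (auto intro!: Bochner_Integration.integrable_diff integrable_const)
  moreover have "wait B x \<tau> (Suc i) = (\<lambda>s. lind i (\<lambda>l. B (\<tau> l) s - x (\<tau> l)))"
    by (rule ext) (rule wait_lind)
  ultimately show ?thesis by simp
qed

lemma wait_compare:
  assumes pM: "prob_space M" and ind: "prob_space.indep_vars M (\<lambda>_. borel) B {1..n}"
    and Bm: "\<forall>i\<in>{1..n}. B i \<in> borel_measurable M"
    and int: "\<forall>i\<in>{1..n}. integrable M (B i)"
    and dil: "\<forall>i\<in>{1..<n}. dil_le M (B i) (B (Suc i))"
    and injs: "inj_on \<sigma> {1..k}" and rs: "\<sigma> ` {1..k} \<subseteq> {1..n}"
    and injt: "inj_on \<tau> {1..k}" and rt: "\<tau> ` {1..k} \<subseteq> {1..n}" and k: "1 \<le> k"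
    and st: "\<forall>l\<in>{1..k}. \<sigma> l \<le> \<tau> l"
  shows "integral\<^sup>L M (wait B (mean_sched M B) \<sigma> (Suc k)) \<le> integral\<^sup>L M (wait B (mean_sched M B) \<tau> (Suc k))"
proof -
  interpret prob_space M by fact
  define \<mu> where "\<mu> = mean_sched M B"
  have Bm': "B i \<in> borel_measurable M" if "i \<in> {1..n}" for i using Bm that by blast
  define P where "P = (\<lambda>l. if l \<in> {1..k} then distr M borel (\<lambda>s. B (\<sigma> l) s - \<mu> (\<sigma> l)) else return borel 0)"
  define Q where "Q = (\<lambda>l. if l \<in> {1..k} then distr M borel (\<lambda>s. B (\<tau> l) s - \<mu> (\<tau> l)) else return borel 0)"
  have sin: "\<sigma> l \<in> {1..n}" "\<tau> l \<in> {1..n}" if "l \<in> {1..k}" for l using that rs rt by blast+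
  have Pp: "prob_space (P i)" for i
    unfolding P_def using sin Bm' by (auto intro!: prob_space_distr prob_space_return)
  have Qp: "prob_space (Q i)" for i
    unfolding Q_def using sin Bm' by (auto intro!: prob_space_distr prob_space_return)
  have Ps: "sets (P i) = sets borel" for i unfolding P_def by auto
  have Qs: "sets (Q i) = sets borel" for i unfolding Q_def by auto
  have Fm: "(\<lambda>y. ennreal (lind k y)) \<in> borel_measurable (PiM {1..k} (\<lambda>_. borel))"
  proof -
    have "(\<lambda>y. lind k y) \<in> borel_measurable (PiM {1..k} (\<lambda>_. borel))"
      by (rule lind_meas_PiM) auto
    then show ?thesis by measurable
  qed
  have inner: "(\<integral>\<^sup>+y. ennreal (lind k (z(j:=y))) \<partial>distr M borel (\<lambda>s. B a s - \<mu> a))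
      \<le> (\<integral>\<^sup>+y. ennreal (lind k (z(j:=y))) \<partial>distr M borel (\<lambda>s. B b s - \<mu> b))"
    if ab: "1 \<le> a" "a \<le> b" "b \<le> n" for a b j z
  proof -
    define \<psi> where "\<psi> = (\<lambda>t. lind k (z(j:=t)))"
    have lip: "\<bar>\<psi> x - \<psi> y\<bar> \<le> \<bar>x - y\<bar>" for x y unfolding \<psi>_def by (rule lind_lip)
    have cvx: "convex_on UNIV \<psi>" unfolding \<psi>_def by (rule lind_convex)
    have \<psi>m: "\<psi> \<in> borel_measurable borel" by (rule borel_measurable_continuous_onI[OF lip_cont[OF lip]])
    have eq: "(\<integral>\<^sup>+y. ennreal (\<psi> y) \<partial>distr M borel (\<lambda>s. B c s - \<mu> c)) = ennreal (\<integral>s. \<psi> (B c s - integral\<^sup>L M (B c)) \<partial>M)"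
      if c: "c \<in> {1..n}" for c
    proof -
      have cm: "(\<lambda>s. B c s - \<mu> c) \<in> borel_measurable M" using Bm' c by measurable
      have "(\<integral>\<^sup>+y. ennreal (\<psi> y) \<partial>distr M borel (\<lambda>s. B c s - \<mu> c)) = (\<integral>\<^sup>+s. ennreal (\<psi> (B c s - \<mu> c)) \<partial>M)"
        using \<psi>m cm by (intro nn_integral_distr) (auto)
      also have "\<dots> = ennreal (\<integral>s. \<psi> (B c s - \<mu> c) \<partial>M)"
      proof (rule nn_integral_eq_integral)
        show "integrable M (\<lambda>s. \<psi> (B c s - \<mu> c))"
          using c int by (intro lip_int[OF pM _ lip] Bochner_Integration.integrable_diff integrable_const) auto
        show "AE x in M. 0 \<le> \<psi> (B c x - \<mu> c)" unfolding \<psi>_def by (simp add: lind_nonneg)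
      qed
      finally show ?thesis by (simp add: \<mu>_def mean_sched_def)
    qed
    have "(\<integral>s. \<psi> (B a s - integral\<^sup>L M (B a)) \<partial>M) \<le> (\<integral>s. \<psi> (B b s - integral\<^sup>L M (B b)) \<partial>M)"
      by (rule dil_chain[OF pM int dil cvx lip ab])
    then show ?thesis using eq[of a] eq[of b] ab unfolding \<psi>_def by (auto intro: ennreal_leI)
  qed
  have le: "(\<integral>\<^sup>+y. ennreal (lind k (z(j:=y))) \<partial>P j) \<le> (\<integral>\<^sup>+y. ennreal (lind k (z(j:=y))) \<partial>Q j)"
    if "j \<in> {1..k}" for j z
  proof -
    have "1 \<le> \<sigma> j" "\<sigma> j \<le> \<tau> j" "\<tau> j \<le> n" using sin[OF that] st that by auto
    then show ?thesis using inner that unfolding P_def Q_def by simp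
  qed
  have H: "(\<integral>\<^sup>+y. ennreal (lind k y) \<partial>PiM {1..k} P) \<le> (\<integral>\<^sup>+y. ennreal (lind k y) \<partial>PiM {1..k} Q)"
    by (rule hybrid[OF Pp Qp Ps Qs _ Fm le]) auto
  have PP: "PiM {1..k} P = PiM {1..k} (\<lambda>l. distr M borel (\<lambda>s. B (\<sigma> l) s - \<mu> (\<sigma> l)))"
    by (intro PiM_cong) (auto simp: P_def)
  have QQ: "PiM {1..k} Q = PiM {1..k} (\<lambda>l. distr M borel (\<lambda>s. B (\<tau> l) s - \<mu> (\<tau> l)))"
    by (intro PiM_cong) (auto simp: Q_def)
  have "(\<integral>\<^sup>+s. ennreal (wait B \<mu> \<sigma> (Suc k) s) \<partial>M) \<le> (\<integral>\<^sup>+s. ennreal (wait B \<mu> \<tau> (Suc k) s) \<partial>M)"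
    using H unfolding PP QQ wait_prod[OF pM ind Bm injs rs k] wait_prod[OF pM ind Bm injt rt k] .
  moreover have "(\<integral>\<^sup>+s. ennreal (wait B \<mu> \<rho> (Suc k) s) \<partial>M) = ennreal (integral\<^sup>L M (wait B \<mu> \<rho> (Suc k)))"
    if "\<rho> ` {1..k} \<subseteq> {1..n}" for \<rho>
  proof (rule nn_integral_eq_integral)
    show "integrable M (wait B \<mu> \<rho> (Suc k))"
    proof (rule wait_int[OF pM])
      fix l assume "l \<in> {1..k}" then have "\<rho> l \<in> {1..n}" using that by blast
      then show "integrable M (B (\<rho> l))" using int by blast
    qed
    show "AE x in M. 0 \<le> wait B \<mu> \<rho> (Suc k) x" by (simp add: wait_nonneg)
  qed
  ultimately have "ennreal (integral\<^sup>L M (wait B \<mu> \<sigma> (Suc k))) \<le> ennreal (integral\<^sup>L M (wait B \<mu> \<tau> (Suc k)))"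
    using rs rt by simp
  moreover have "0 \<le> integral\<^sup>L M (wait B \<mu> \<tau> (Suc k))" by (simp add: wait_nonneg)
  ultimately show ?thesis unfolding \<mu>_def by (simp add: ennreal_le_iff)
qed



lemma exists_sigma:
  fixes \<tau> :: "nat \<Rightarrow> nat" and n k :: nat
  assumes tp: "\<tau> permutes {1..n}" and kn: "k < n"
  shows "\<exists>\<sigma>. \<sigma> permutes {1..n} \<and> (\<forall>i\<in>{1..k}. \<sigma> i \<le> k) \<and> (\<forall>i\<in>{1..k}. \<sigma> i \<le> \<tau> i)"
proof -
  define A where "A = {i\<in>{1..k}. \<tau> i \<le> k}"
  define P where "P = {1..k} - A"
  define R where "R = {1..k} - \<tau> ` A"
  have injt: "inj_on \<tau> {1..k}" using permutes_inj[OF tp] by (auto intro: inj_on_subset)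
  have A1: "A \<subseteq> {1..k}" unfolding A_def by auto
  have tA: "\<tau> ` A \<subseteq> {1..k}"
  proof
    fix y assume "y \<in> \<tau> ` A"
    then obtain i where i: "i \<in> A" "y = \<tau> i" by auto
    then have "i \<in> {1..k}" using A1 by blast
    then have "i \<in> {1..n}" using kn by auto
    then have "\<tau> i \<in> {1..n}" using permutes_in_image[OF tp] by blast
    then show "y \<in> {1..k}" using i unfolding A_def by auto
  qed
  have cA: "card (\<tau> ` A) = card A" using injt A1 by (intro card_image) (rule inj_on_subset)
  have "card P = card {1..k} - card A" unfolding P_def using A1 by (simp add: card_Diff_subset finite_subset)
  moreover have "card R = card {1..k} - card A" unfolding R_def using tA cA by (simp add: card_Diff_subset finite_subset)
  ultimately have "card P = card R" by simp
  then obtain g where g: "bij_betw g P R"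
    using finite_same_card_bij[of P R] unfolding P_def R_def by auto
  define \<sigma> where "\<sigma> = (\<lambda>i. if i \<in> A then \<tau> i else if i \<in> P then g i else i)"
  have im: "\<sigma> ` {1..k} \<subseteq> {1..k}"
  proof
    fix y assume "y \<in> \<sigma> ` {1..k}"
    then obtain i where i: "i \<in> {1..k}" "y = \<sigma> i" by auto
    show "y \<in> {1..k}"
    proof (cases "i \<in> A")
      case True then show ?thesis using i tA by (auto simp: \<sigma>_def)
    next
      case False then have "i \<in> P" using i by (auto simp: P_def)
      then have "g i \<in> R" using g bij_betwE by blast
      then show ?thesis using i False \<open>i \<in> P\<close> by (auto simp: \<sigma>_def R_def)
    qed
  qed
  have inj: "inj_on \<sigma> {1..k}"
  proof (rule inj_onI)
    fix i i' assume ii: "i \<in> {1..k}" "i' \<in> {1..k}" "\<sigma> i = \<sigma> i'"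
    have gP: "g j \<in> R" if "j \<in> P" for j using g that bij_betwE by blast
    have gi: "inj_on g P" using g bij_betw_def by blast
    show "i = i'"
    proof (cases "i \<in> A")
      case True
      show ?thesis
      proof (cases "i' \<in> A")
        case True
        with \<open>i \<in> A\<close> ii have "\<tau> i = \<tau> i'" by (simp add: \<sigma>_def)
        then show ?thesis using injt ii by (auto dest: inj_onD)
      next
        case False
        then have "i' \<in> P" using ii by (auto simp: P_def)
        then have "\<sigma> i' \<in> R" using gP False by (simp add: \<sigma>_def)
        moreover have "\<sigma> i \<in> \<tau> ` A" using True by (simp add: \<sigma>_def)
        ultimately show ?thesis using ii by (auto simp: R_def)
      qed
    next
      case False
      then have iP: "i \<in> P" using ii by (auto simp: P_def)
      show ?thesis
      proof (cases "i' \<in> A")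
        case True
        have "\<sigma> i \<in> R" using gP iP False by (simp add: \<sigma>_def)
        moreover have "\<sigma> i' \<in> \<tau> ` A" using True by (simp add: \<sigma>_def)
        ultimately show ?thesis using ii by (auto simp: R_def)
      next
        case False2: False
        then have "i' \<in> P" using ii by (auto simp: P_def)
        then have "g i = g i'" using ii iP False False2 by (simp add: \<sigma>_def)
        then show ?thesis using gi iP \<open>i' \<in> P\<close> by (auto dest: inj_onD)
      qed
    qed
  qed
  have bij: "bij_betw \<sigma> {1..k} {1..k}"
    using endo_inj_surj[OF _ im inj] inj by (simp add: bij_betw_def)
  have fixp: "\<sigma> x = x" if "x \<notin> {1..k}" for x
    using that A1 unfolding \<sigma>_def P_def by auto
  have sp: "\<sigma> permutes {1..k}" by (rule bij_imp_permutes[OF bij fixp])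
  then have "\<sigma> permutes {1..n}" by (rule permutes_subset) (use kn in auto)
  moreover have sk: "\<forall>i\<in>{1..k}. \<sigma> i \<le> k"
  proof
    fix i assume "i \<in> {1..k}" then have "\<sigma> i \<in> {1..k}" using im by blast
    then show "\<sigma> i \<le> k" by simp
  qed
  moreover have "\<forall>i\<in>{1..k}. \<sigma> i \<le> \<tau> i"
  proof
    fix i assume i: "i \<in> {1..k}"
    show "\<sigma> i \<le> \<tau> i"
    proof (cases "i \<in> A")
      case False
      then have "\<tau> i > k" using i by (auto simp: A_def)
      moreover have "\<sigma> i \<le> k" using sk i by blast
      ultimately show ?thesis by simp
    qed (simp add: \<sigma>_def)
  qed
  ultimately show ?thesis by blast
qed

lemma opt_set_finite:
  "finite {integral\<^sup>L M (wait B x \<tau> (Suc k)) | \<tau>. \<tau> permutes {1..n} \<and> (\<forall>i\<in>{1..k}. \<tau> i \<le> k)}"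
proof -
  have "{integral\<^sup>L M (wait B x \<tau> (Suc k)) | \<tau>. \<tau> permutes {1..n} \<and> (\<forall>i\<in>{1..k}. \<tau> i \<le> k)}
     \<subseteq> (\<lambda>\<tau>. integral\<^sup>L M (wait B x \<tau> (Suc k))) ` {\<tau>. \<tau> permutes {1..n}}" by auto
  moreover have "finite {\<tau>. \<tau> permutes {1..n::nat}}" by (rule finite_permutations) simp
  ultimately show ?thesis by (meson finite_imageI finite_subset)
qed

lemma opt_le:
  assumes pM: "prob_space M" and ind: "prob_space.indep_vars M (\<lambda>_. borel) B {1..n}"
    and Bm: "\<forall>i\<in>{1..n}. B i \<in> borel_measurable M"
    and int: "\<forall>i\<in>{1..n}. integrable M (B i)"
    and dil: "\<forall>i\<in>{1..<n}. dil_le M (B i) (B (Suc i))"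
    and tp: "\<tau> permutes {1..n}" and k: "1 \<le> k" "k < n"
  shows "EW_OPT' M n B k \<le> integral\<^sup>L M (wait B (mean_sched M B) \<tau> (Suc k))"
proof -
  obtain \<sigma> where s: "\<sigma> permutes {1..n}" "\<forall>i\<in>{1..k}. \<sigma> i \<le> k" "\<forall>i\<in>{1..k}. \<sigma> i \<le> \<tau> i"
    using exists_sigma[OF tp k(2)] by blast
  have "EW_OPT' M n B k \<le> integral\<^sup>L M (wait B (mean_sched M B) \<sigma> (Suc k))"
    unfolding EW_OPT'_def
  proof (rule Min_le[OF opt_set_finite])
    show "integral\<^sup>L M (wait B (mean_sched M B) \<sigma> (Suc k)) \<in> {integral\<^sup>L M (wait B (mean_sched M B) \<tau> (Suc k)) |\<tau>. \<tau> permutes {1..n} \<and> (\<forall>i\<in>{1..k}. \<tau> i \<le> k)}"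
      using s(1,2) by auto
  qed
  also have "\<dots> \<le> integral\<^sup>L M (wait B (mean_sched M B) \<tau> (Suc k))"
  proof -
    have i1: "inj_on \<sigma> {1..k}" using permutes_inj[OF s(1)] by (simp add: inj_on_def inj_def)
    have i2: "inj_on \<tau> {1..k}" using permutes_inj[OF tp] by (simp add: inj_on_def inj_def)
    have r1: "\<sigma> ` {1..k} \<subseteq> {1..n}"
    proof
      fix y assume "y \<in> \<sigma> ` {1..k}" then obtain i where "i \<in> {1..k}" "y = \<sigma> i" by blast
      then show "y \<in> {1..n}" using permutes_in_image[OF s(1), of i] k by simp
    qed
    have r2: "\<tau> ` {1..k} \<subseteq> {1..n}"
    proof
      fix y assume "y \<in> \<tau> ` {1..k}" then obtain i where "i \<in> {1..k}" "y = \<tau> i" by blast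
      then show "y \<in> {1..n}" using permutes_in_image[OF tp, of i] k by simp
    qed
    show ?thesis by (rule wait_compare[OF pM ind Bm int dil i1 r1 i2 r2 k(1) s(3)])
  qed
  finally show ?thesis .
qed

lemma wait_Suc0: "wait B x \<tau> (Suc 0) = (\<lambda>s. 0)"
  by (rule ext) simp

lemma wait_0: "wait B x \<tau> 0 = (\<lambda>s. 0)"
  by (rule ext) simp

lemma idle_Suc0: "idle B x \<tau> (Suc 0) = (\<lambda>s. 0)"
  by (rule ext) simp

lemma wait_int':
  assumes pM: "prob_space M" and int: "\<forall>i\<in>{1..n}. integrable M (B i)"
    and rng: "\<forall>l\<in>{1..j}. \<tau> l \<in> {1..n}"
  shows "integrable M (wait B x \<tau> (Suc j))"
proof (rule wait_int[OF pM])
  fix l assume "l \<in> {1..j}" then have "\<tau> l \<in> {1..n}" using rng by blast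
  then show "integrable M (B (\<tau> l))" using int by blast
qed

lemma tele:
  assumes pM: "prob_space M" and int: "\<forall>i\<in>{1..n}. integrable M (B i)"
    and rng: "\<forall>i\<in>{1..n}. \<tau> i \<in> {1..n}"
  shows "m \<le> n \<Longrightarrow> (\<Sum>i=1..m. integral\<^sup>L M (idle B (mean_sched M B) \<tau> i)) = integral\<^sup>L M (wait B (mean_sched M B) \<tau> m)"
proof (induction m)
  case 0 then show ?case by (simp add: wait_0)
next
  case (Suc m)
  interpret prob_space M by fact
  define \<mu> where "\<mu> = mean_sched M B"
  have IH: "(\<Sum>i=1..m. integral\<^sup>L M (idle B \<mu> \<tau> i)) = integral\<^sup>L M (wait B \<mu> \<tau> m)"
    using Suc by (simp add: \<mu>_def)
  have step: "integral\<^sup>L M (wait B \<mu> \<tau> m) + integral\<^sup>L M (idle B \<mu> \<tau> (Suc m)) = integral\<^sup>L M (wait B \<mu> \<tau> (Suc m))"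
  proof (cases m)
    case 0 then show ?thesis by (simp add: wait_0 wait_Suc0 idle_Suc0)
  next
    case (Suc j)
    have jn: "Suc j < n" using Suc \<open>Suc m \<le> n\<close> by simp
    have tj: "\<tau> (Suc j) \<in> {1..n}" using rng jn by auto
    have Wi: "integrable M (wait B \<mu> \<tau> (Suc j))"
      by (rule wait_int'[OF pM int]) (use rng jn in auto)
    have Bi: "integrable M (B (\<tau> (Suc j)))" using int tj by blast
    define a where "a = (\<lambda>s. wait B \<mu> \<tau> (Suc j) s + B (\<tau> (Suc j)) s - \<mu> (\<tau> (Suc j)))"
    have ai: "integrable M a" unfolding a_def using Wi Bi by auto
    have Ea: "integral\<^sup>L M a = integral\<^sup>L M (wait B \<mu> \<tau> (Suc j))"
      unfolding a_def using Wi Bi by (simp add: \<mu>_def mean_sched_def prob_space)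
    have W: "wait B \<mu> \<tau> (Suc (Suc j)) = (\<lambda>s. max 0 (a s))" by (rule ext) (simp add: a_def)
    have I: "idle B \<mu> \<tau> (Suc (Suc j)) = (\<lambda>s. max 0 (- a s))" by (rule ext) (simp add: a_def)
    have WI: "(\<lambda>s. max 0 (a s)) = (\<lambda>s. max 0 (- a s) + a s)" by (rule ext) auto
    have Ii: "integrable M (\<lambda>s. max 0 (- a s))" using ai by auto
    have "integral\<^sup>L M (\<lambda>s. max 0 (a s)) = integral\<^sup>L M (\<lambda>s. max 0 (- a s)) + integral\<^sup>L M a"
      unfolding WI using Ii ai by (rule Bochner_Integration.integral_add)
    then show ?thesis unfolding Suc W I using Ea by simp
  qed
  have "(\<Sum>i=1..Suc m. integral\<^sup>L M (idle B \<mu> \<tau> i)) = (\<Sum>i=1..m. integral\<^sup>L M (idle B \<mu> \<tau> i)) + integral\<^sup>L M (idle B \<mu> \<tau> (Suc m))"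
    by simp
  then show ?case using IH step by (simp add: \<mu>_def)
qed

lemma zero_case:
  assumes pM: "prob_space M" and int: "\<forall>i\<in>{1..n}. integrable M (B i)"
    and sp: "\<sigma> permutes {1..n}" and sk: "\<forall>i\<in>{1..k}. \<sigma> i \<le> k" and k: "1 \<le> k" "k < n"
    and z: "integral\<^sup>L M (wait B (mean_sched M B) \<sigma> (Suc k)) = 0"
  shows "integral\<^sup>L M (wait B (mean_sched M B) id (Suc k)) = 0"
proof -
  interpret prob_space M by fact
  define \<mu> where "\<mu> = mean_sched M B"
  define g where "g = (\<lambda>j. integral\<^sup>L M (wait B \<mu> \<sigma> (Suc j)))"
  have srng: "\<forall>l\<in>{1..j}. \<sigma> l \<in> {1..n}" if "j \<le> k" for j
  proof
    fix l assume "l \<in> {1..j}" then have "l \<in> {1..n}" using that k by simp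
    then show "\<sigma> l \<in> {1..n}" using permutes_in_image[OF sp] by blast
  qed
  have Ci: "integrable M (\<lambda>s. B l s - c)" if "l \<in> {1..n}" for l c
  proof -
    have "integrable M (B l)" using int that by blast
    then show ?thesis by (intro Bochner_Integration.integrable_diff integrable_const)
  qed
  have EC: "integral\<^sup>L M (\<lambda>s. B l s - \<mu> l) = 0" if "l \<in> {1..n}" for l
    using int that by (simp add: \<mu>_def mean_sched_def prob_space)
  have gstep: "g j \<le> g (Suc j)" if "j < k" for j
  proof -
    have Wi: "integrable M (wait B \<mu> \<sigma> (Suc j))" by (rule wait_int'[OF pM int srng]) (use that in auto)
    have tj: "\<sigma> (Suc j) \<in> {1..n}" using srng[of "Suc j"] that by auto
    have "integral\<^sup>L M (wait B \<mu> \<sigma> (Suc j)) = integral\<^sup>L M (\<lambda>s. wait B \<mu> \<sigma> (Suc j) s + (B (\<sigma> (Suc j)) s - \<mu> (\<sigma> (Suc j))))"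
      using Wi Ci[OF tj] EC[OF tj] by simp
    also have "\<dots> \<le> integral\<^sup>L M (wait B \<mu> \<sigma> (Suc (Suc j)))"
    proof (rule integral_mono)
      show "integrable M (\<lambda>s. wait B \<mu> \<sigma> (Suc j) s + (B (\<sigma> (Suc j)) s - \<mu> (\<sigma> (Suc j))))"
        using Wi Ci[OF tj] by auto
      show "integrable M (wait B \<mu> \<sigma> (Suc (Suc j)))" by (rule wait_int'[OF pM int srng]) (use that in auto)
    qed simp
    finally show ?thesis unfolding g_def .
  qed
  have gmono: "g j \<le> g k" if "j \<le> k" for j
    using that
  proof (induction rule: inc_induct)
    case base then show ?case by simp
  next
    case (step m) then show ?case using gstep[of m] by simp
  qed
  have gk: "g k = 0" using z by (simp add: g_def \<mu>_def)
  have pos: "integral\<^sup>L M (\<lambda>s. \<bar>B (\<sigma> j) s - \<mu> (\<sigma> j)\<bar>) \<le> 0" if j: "j \<in> {1..k}" for j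
  proof -
    obtain j' where j': "j = Suc j'" using j by (cases j) auto
    have tj: "\<sigma> j \<in> {1..n}" using srng[of k] j by auto
    let ?C = "\<lambda>s. B (\<sigma> j) s - \<mu> (\<sigma> j)"
    have "integral\<^sup>L M (\<lambda>s. max 0 (?C s)) \<le> integral\<^sup>L M (wait B \<mu> \<sigma> (Suc j))"
    proof (rule integral_mono)
      show "integrable M (\<lambda>s. max 0 (?C s))" using Ci[OF tj] by auto
      show "integrable M (wait B \<mu> \<sigma> (Suc j))" by (rule wait_int'[OF pM int srng]) (use j in auto)
      fix s
      have "0 \<le> wait B \<mu> \<sigma> (Suc j') s" by (rule wait_nonneg)
      moreover have "wait B \<mu> \<sigma> (Suc j) s = max 0 (wait B \<mu> \<sigma> (Suc j') s + ?C s)" unfolding j' by simp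
      ultimately show "max 0 (?C s) \<le> wait B \<mu> \<sigma> (Suc j) s" by linarith
    qed
    also have "\<dots> \<le> 0" using gmono[of j] j gk by (simp add: g_def)
    finally have p: "integral\<^sup>L M (\<lambda>s. max 0 (?C s)) \<le> 0" .
    have ab: "(\<lambda>s. \<bar>?C s\<bar>) = (\<lambda>s. 2 * max 0 (?C s) - ?C s)" by (rule ext) (simp add: max_def abs_if)
    have "integral\<^sup>L M (\<lambda>s. \<bar>?C s\<bar>) = 2 * integral\<^sup>L M (\<lambda>s. max 0 (?C s)) - integral\<^sup>L M ?C"
      unfolding ab using Ci[OF tj] by (simp add: Bochner_Integration.integral_diff)
    then show ?thesis using p EC[OF tj] by linarith
  qed
  have surj: "\<sigma> ` {1..k} = {1..k}"
  proof (rule endo_inj_surj)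
    show "inj_on \<sigma> {1..k}" using permutes_inj[OF sp] by (simp add: inj_on_def inj_def)
    show "\<sigma> ` {1..k} \<subseteq> {1..k}"
    proof
      fix y assume "y \<in> \<sigma> ` {1..k}" then obtain i where i: "i \<in> {1..k}" "y = \<sigma> i" by blast
      then have "\<sigma> i \<in> {1..n}" using srng[of k] by blast
      then show "y \<in> {1..k}" using i sk by auto
    qed
  qed simp
  have absl: "integral\<^sup>L M (\<lambda>s. \<bar>B l s - \<mu> l\<bar>) \<le> 0" if "l \<in> {1..k}" for l
  proof -
    have "l \<in> \<sigma> ` {1..k}" using that surj by simp
    then obtain j where jj: "j \<in> {1..k}" "l = \<sigma> j" by (rule imageE) simp
    show ?thesis using pos[OF jj(1)] unfolding jj(2) .
  qed
  have idz: "integral\<^sup>L M (wait B \<mu> id (Suc j)) \<le> 0" if "j \<le> k" for j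
    using that
  proof (induction j)
    case 0 then show ?case by (simp add: wait_Suc0)
  next
    case (Suc j)
    have tj: "Suc j \<in> {1..n}" using Suc k by auto
    have Wi: "integrable M (wait B \<mu> id (Suc j))" by (rule wait_int'[OF pM int]) (use Suc k in auto)
    have "integral\<^sup>L M (wait B \<mu> id (Suc (Suc j))) \<le> integral\<^sup>L M (\<lambda>s. wait B \<mu> id (Suc j) s + \<bar>B (Suc j) s - \<mu> (Suc j)\<bar>)"
    proof (rule integral_mono)
      show "integrable M (wait B \<mu> id (Suc (Suc j)))" by (rule wait_int'[OF pM int]) (use Suc k in auto)
      show "integrable M (\<lambda>s. wait B \<mu> id (Suc j) s + \<bar>B (Suc j) s - \<mu> (Suc j)\<bar>)" using Wi Ci[OF tj] by auto
      fix s
      have "0 \<le> wait B \<mu> id (Suc j) s" by (rule wait_nonneg)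
      moreover have "wait B \<mu> id (Suc (Suc j)) s = max 0 (wait B \<mu> id (Suc j) s + (B (Suc j) s - \<mu> (Suc j)))" by simp
      ultimately show "wait B \<mu> id (Suc (Suc j)) s \<le> wait B \<mu> id (Suc j) s + \<bar>B (Suc j) s - \<mu> (Suc j)\<bar>" by linarith
    qed
    also have "\<dots> = integral\<^sup>L M (wait B \<mu> id (Suc j)) + integral\<^sup>L M (\<lambda>s. \<bar>B (Suc j) s - \<mu> (Suc j)\<bar>)"
      using Wi Ci[OF tj] by (simp add: Bochner_Integration.integral_add)
    also have "\<dots> \<le> 0"
    proof -
      have "j \<le> k" using Suc.prems by simp
      then have "integral\<^sup>L M (wait B \<mu> id (Suc j)) \<le> 0" by (rule Suc.IH)
      moreover have "integral\<^sup>L M (\<lambda>s. \<bar>B (Suc j) s - \<mu> (Suc j)\<bar>) \<le> 0" using absl[of "Suc j"] Suc.prems by simp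
      ultimately show ?thesis by linarith
    qed
    finally show ?case .
  qed
  have "0 \<le> integral\<^sup>L M (wait B \<mu> id (Suc k))" by (simp add: wait_nonneg)
  then show ?thesis using idz[of k] by (simp add: \<mu>_def)
qed

lemma cost_eq:
  assumes pM: "prob_space M" and int: "\<forall>i\<in>{1..n}. integrable M (B i)"
    and rng: "\<forall>i\<in>{1..n}. \<tau> i \<in> {1..n}" and n: "2 \<le> n"
  shows "cost M n B \<tau> (mean_sched M B) w =
     w * integral\<^sup>L M (wait B (mean_sched M B) \<tau> (Suc (n - 1)))
     + (1 - w) * (\<Sum>k=1..n-1. integral\<^sup>L M (wait B (mean_sched M B) \<tau> (Suc k)))"
proof -
  define f where "f = (\<lambda>i. integral\<^sup>L M (wait B (mean_sched M B) \<tau> i))"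
  have t: "(\<Sum>i=1..n. integral\<^sup>L M (idle B (mean_sched M B) \<tau> i)) = f n"
    unfolding f_def by (rule tele[OF pM int rng]) simp
  have f1: "f 1 = 0" by (simp add: f_def wait_Suc0)
  have "(\<Sum>i=1..n. f i) = f 1 + (\<Sum>i=Suc 1..n. f i)" using n by (intro sum.atLeast_Suc_atMost) simp
  also have "(\<Sum>i=Suc 1..n. f i) = (\<Sum>i=Suc 1..Suc (n-1). f i)" using n by simp
  also have "\<dots> = (\<Sum>k=1..n-1. f (Suc k))" by (simp only: sum.atLeast_Suc_atMost_Suc_shift comp_def)
  finally have s: "(\<Sum>i=1..n. f i) = (\<Sum>k=1..n-1. f (Suc k))" using f1 by simp
  have nn: "n = Suc (n - 1)" using n by simp
  have "cost M n B \<tau> (mean_sched M B) w = w * f n + (1 - w) * (\<Sum>i=1..n. f i)"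
    unfolding cost_def t by (simp add: f_def)
  also have "\<dots> = w * f (Suc (n - 1)) + (1 - w) * (\<Sum>k=1..n-1. f (Suc k))"
    using s nn by simp
  finally show ?thesis by (simp add: f_def)
qed

theorem lemma3p1:
  fixes M :: "'a measure" and n :: nat and w \<rho>' :: real and B :: "nat \<Rightarrow> 'a \<Rightarrow> real"
  assumes "prob_space M"
    and "n \<ge> 1"
    and "0 < w" and "w < 1"
    and "\<forall>i\<in>{1..n}. B i \<in> borel_measurable M"
    and "prob_space.indep_vars M (\<lambda>_. borel) B {1..n}"
    and "\<forall>i\<in>{1..n}. integrable M (B i)"
    and "\<forall>i\<in>{1..n}. integrable M (\<lambda>s. (B i s)\<^sup>2)"
    and "\<forall>i\<in>{1..<n}. dil_le M (B i) (B (Suc i))"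
    and "0 < Min {cost M n B \<tau> (mean_sched M B) w | \<tau>. \<tau> permutes {1..n}}"
    and "\<forall>k\<in>{1..n-1}. EW_SVF M B k / EW_OPT' M n B k \<le> \<rho>'"
  shows "rho M n B w \<le> \<rho>'"
proof -
  note pM = assms(1) and Bm = assms(5) and ind = assms(6) and int = assms(7) and dil = assms(9)
    and minpos = assms(10) and rat = assms(11)
  interpret prob_space M by fact
  define \<mu> where "\<mu> = mean_sched M B"
  define S where "S = {cost M n B \<tau> \<mu> w | \<tau>. \<tau> permutes {1..n}}"
  have Sfin: "finite S"
  proof -
    have "S = (\<lambda>\<tau>. cost M n B \<tau> \<mu> w) ` {\<tau>. \<tau> permutes {1..n}}" unfolding S_def by auto
    moreover have "finite {\<tau>. \<tau> permutes {1..n::nat}}" by (rule finite_permutations) simp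
    ultimately show ?thesis by simp
  qed
  have idS: "cost M n B id \<mu> w \<in> S" unfolding S_def using permutes_id by blast
  have Sne: "S \<noteq> {}" using idS by blast
  have MinS: "Min S \<in> S" using Sfin Sne by (rule Min_in)
  then obtain \<tau>0 where t0: "\<tau>0 permutes {1..n}" "Min S = cost M n B \<tau>0 \<mu> w" unfolding S_def by blast
  have minpos': "0 < Min S" using minpos unfolding S_def \<mu>_def .
  show ?thesis
  proof (cases "n = 1")
    case True
    have "cost M n B \<tau>0 \<mu> w = 0" using True by (simp add: cost_def idle_Suc0 wait_Suc0)
    then show ?thesis using minpos' t0 by simp
  next
    case False
    then have n2: "2 \<le> n" using assms(2) by simp
    define g where "g = (\<lambda>\<tau> k. integral\<^sup>L M (wait B \<mu> \<tau> (Suc k)))"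
    have gnn: "0 \<le> g \<tau> k" for \<tau> k unfolding g_def by (simp add: wait_nonneg)
    have key: "g id k \<le> \<rho>' * g \<tau> k" if tp: "\<tau> permutes {1..n}" and kk: "k \<in> {1..n-1}" for \<tau> k
    proof -
      have k: "1 \<le> k" "k < n" using kk n2 by auto
      define T where "T = {integral\<^sup>L M (wait B (mean_sched M B) \<sigma> (Suc k)) | \<sigma>. \<sigma> permutes {1..n} \<and> (\<forall>i\<in>{1..k}. \<sigma> i \<le> k)}"
      have Tfin: "finite T" unfolding T_def by (rule opt_set_finite)
      have "integral\<^sup>L M (wait B (mean_sched M B) id (Suc k)) \<in> T" unfolding T_def
        using permutes_id[of "{1..n}"] k by auto
      then have Tne: "T \<noteq> {}" by blast
      have "Min T \<in> T" using Tfin Tne by (rule Min_in)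
      then obtain \<sigma>0 where s0: "\<sigma>0 permutes {1..n}" "\<forall>i\<in>{1..k}. \<sigma>0 i \<le> k"
        "Min T = integral\<^sup>L M (wait B (mean_sched M B) \<sigma>0 (Suc k))" unfolding T_def by blast
      have O: "EW_OPT' M n B k = g \<sigma>0 k" unfolding EW_OPT'_def g_def \<mu>_def using s0(3) unfolding T_def .
      have SV: "EW_SVF M B k = g id k" unfolding EW_SVF_def g_def \<mu>_def ..
      have "EW_SVF M B k / EW_OPT' M n B k \<le> \<rho>'" using rat kk by blast
      then have r: "g id k / g \<sigma>0 k \<le> \<rho>'" by (simp only: O SV)
      have rho0: "0 \<le> \<rho>'" using r gnn[of id k] gnn[of \<sigma>0 k] divide_nonneg_nonneg by (metis order.trans)
      have ol: "g \<sigma>0 k \<le> g \<tau> k"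
        using opt_le[OF pM ind Bm int dil tp k] O unfolding g_def \<mu>_def by simp
      show ?thesis
      proof (cases "g \<sigma>0 k = 0")
        case True
        have "g id k = 0" using zero_case[OF pM int s0(1) s0(2) k] True unfolding g_def \<mu>_def by simp
        then show ?thesis using rho0 gnn[of \<tau> k] by simp
      next
        case False
        then have pos: "0 < g \<sigma>0 k" using gnn[of \<sigma>0 k] by simp
        then have "g id k \<le> \<rho>' * g \<sigma>0 k" using r by (simp add: pos_divide_le_eq)
        also have "\<dots> \<le> \<rho>' * g \<tau> k" using ol rho0 by (rule mult_left_mono)
        finally show ?thesis .
      qed
    qed
    have rng: "\<forall>i\<in>{1..n}. \<tau> i \<in> {1..n}" if "\<tau> permutes {1..n}" for \<tau>
      using permutes_in_image[OF that] by blast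
    have ce: "cost M n B \<tau> \<mu> w = w * g \<tau> (n - 1) + (1 - w) * (\<Sum>k=1..n-1. g \<tau> k)"
      if "\<tau> permutes {1..n}" for \<tau>
      unfolding g_def \<mu>_def by (rule cost_eq[OF pM int rng[OF that] n2])
    have k1: "n - 1 \<in> {1..n-1}" using n2 by simp
    have "cost M n B id \<mu> w = w * g id (n - 1) + (1 - w) * (\<Sum>k=1..n-1. g id k)"
      by (rule ce[OF permutes_id])
    also have "\<dots> \<le> w * (\<rho>' * g \<tau>0 (n - 1)) + (1 - w) * (\<Sum>k=1..n-1. \<rho>' * g \<tau>0 k)"
    proof (rule add_mono)
      show "w * g id (n - 1) \<le> w * (\<rho>' * g \<tau>0 (n - 1))"
        using key[OF t0(1) k1] assms(3) by (simp add: mult_left_mono)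
      have "(\<Sum>k=1..n-1. g id k) \<le> (\<Sum>k=1..n-1. \<rho>' * g \<tau>0 k)"
        using key[OF t0(1)] by (rule sum_mono)
      then show "(1 - w) * (\<Sum>k=1..n-1. g id k) \<le> (1 - w) * (\<Sum>k=1..n-1. \<rho>' * g \<tau>0 k)"
        using assms(4) by (simp add: mult_left_mono)
    qed
    also have "\<dots> = \<rho>' * cost M n B \<tau>0 \<mu> w"
      unfolding ce[OF t0(1)] by (simp add: sum_distrib_left algebra_simps)
    finally have le: "cost M n B id \<mu> w \<le> \<rho>' * Min S" using t0 by simp
    have "rho M n B w = cost M n B id \<mu> w / Min S" unfolding rho_def S_def \<mu>_def ..
    also have "\<dots> \<le> \<rho>'" using le minpos' by (simp add: pos_divide_le_eq)
    finally show ?thesis .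
  qed
qed

end
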